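(* Let $(\mathcal C,\otimes,I,a,l,r)$ be a monoidal category, let $(F,\Delta,\varepsilon,F_2,F_0)$ and $(G,\delta,\epsilon,G_2,G_0)$ be bicomonads on $\mathcal C$ and $\varphi:FG\to GF$ a comonad distributive law. Then $\varphi$ is a monoidal comonad distributive law if and only if the smash coproduct $FG$, i.e. the comonad with comultiplication $X\mapsto F\varphi_{GX}\circ FF\delta_X\circ\Delta_{GX}$ and counit $X\mapsto \epsilon_X\circ\varepsilon_{GX}$, equipped with the monoidal functor structure $(FG)_2(M,N)=F(G_2(M,N))\circ F_2(GM,GN)$ and $(FG)_0=F(G_0)\circ F_0$, is a bicomonad on $\mathcal C$.
   Context: A comonad $(F,\Delta,\varepsilon)$ on a category is an endofunctor with natural $\Delta:F\to FF$, $\varepsilon:F\to\mathrm{id}$ satisfying $F\Delta\circ\Delta=\Delta F\circ\Delta$, $F\varepsilon\circ\Delta=\varepsilon F\circ\Delta=\mathrm{id}_F$. For comonads $(F,\Delta,\varepsilon)$, $(G,\delta,\epsilon)$, a comonad distributive law is a natural $\varphi:FG\to GF$ with $G\varphi\circ\varphi G\circ F\delta=\delta F\circ\varphi$, $\varphi F\circ F\varphi\circ\Delta G=G\Delta\circ\varphi$, $G\varepsilon\circ\varphi=\varepsilon G$, $\epsilon F\circ\varphi=F\epsilon$; then $FG$ with the stated comultiplication and counit is a comonad. A bicomonad on a monoidal category is a comonad $(G,\delta,\epsilon)$ which is also a monoidal functor $(G,G_2,G_0)$ ($G_2(X,Y):GX\otimes GY\to G(X\otimes Y)$ natural, $G_0:I\to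 GI$, satisfying the usual coherence with $a,l,r$) such that $G(G_2(X,Y))\circ G_2(GX,GY)\circ(\delta_X\otimes\delta_Y)=\delta_{X\otimes Y}\circ G_2(X,Y)$, $\epsilon_{X\otimes Y}\circ G_2(X,Y)=\epsilon_X\otimes\epsilon_Y$, $G(G_0)\circ G_0=\delta_I\circ G_0$, $\epsilon_I\circ G_0=\mathrm{id}_I$. A comonad distributive law $\varphi$ between bicomonads $F,G$ is called monoidal if for all $M,N$: $\varphi_{M\otimes N}\circ F(G_2(M,N))\circ F_2(GM,GN)=G(F_2(M,N))\circ G_2(FM,FN)\circ(\varphi_M\otimes\varphi_N)$ and $\varphi_I\circ F(G_0)\circ F_0=G(F_0)\circ G_0$. *)

theory Defs
  imports Main
begin

text \<open>Categories are represented concretely: a set of objects (of type 'o), a set of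
arrows (of type 'a), source/target maps, composition (cmp C g f = g after f) and
identities. All conditions are
only imposed on objects/arrows of the category.\<close>

record ('o, 'a) cat =
  ob  :: "'o set"
  ar  :: "'a set"
  src :: "'a \<Rightarrow> 'o"
  trg :: "'a \<Rightarrow> 'o"
  cmp :: "'a \<Rightarrow> 'a \<Rightarrow> 'a"
  idm :: "'o \<Rightarrow> 'a"

definition hom :: "('o, 'a, 'm) cat_scheme \<Rightarrow> 'o \<Rightarrow> 'o \<Rightarrow> 'a set" where
  "hom C X Y = {f \<in> ar C. src C f = X \<and> trg C f = Y}"

definition category :: "('o, 'a, 'm) cat_scheme \<Rightarrow> bool" where
  "category C \<longleftrightarrow>
     (\<forall>f\<in>ar C. src C f \<in> ob C \<and> trg C f \<in> ob C) \<and>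
     (\<forall>X\<in>ob C. idm C X \<in> hom C X X) \<and>
     (\<forall>f\<in>ar C. \<forall>g\<in>ar C. trg C f = src C g \<longrightarrow> cmp C g f \<in> hom C (src C f) (trg C g)) \<and>
     (\<forall>f\<in>ar C. cmp C f (idm C (src C f)) = f \<and> cmp C (idm C (trg C f)) f = f) \<and>
     (\<forall>f\<in>ar C. \<forall>g\<in>ar C. \<forall>h\<in>ar C. trg C f = src C g \<longrightarrow> trg C g = src C h \<longrightarrow>
        cmp C h (cmp C g f) = cmp C (cmp C h g) f)"

definition is_iso :: "('o, 'a, 'm) cat_scheme \<Rightarrow> 'a \<Rightarrow> bool" where
  "is_iso C f \<longleftrightarrow> f \<in> ar C \<and>
     (\<exists>g\<in>hom C (trg C f) (src C f). cmp C g f = idm C (src C f) \<and> cmp C f g = idm C (trg C f))"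

record ('o, 'a) moncat = "('o, 'a) cat" +
  tno :: "'o \<Rightarrow> 'o \<Rightarrow> 'o"
  tna :: "'a \<Rightarrow> 'a \<Rightarrow> 'a"
  unt :: "'o"
  asc :: "'o \<Rightarrow> 'o \<Rightarrow> 'o \<Rightarrow> 'a"
  lu  :: "'o \<Rightarrow> 'a"
  ru  :: "'o \<Rightarrow> 'a"

definition monoidal_category :: "('o, 'a, 'm) moncat_scheme \<Rightarrow> bool" where
  "monoidal_category C \<longleftrightarrow> category C \<and>
     \<comment> \<open>tensor is a bifunctor\<close>
     (\<forall>X\<in>ob C. \<forall>Y\<in>ob C. tno C X Y \<in> ob C) \<and>
     (\<forall>f\<in>ar C. \<forall>g\<in>ar C. tna C f g \<in> hom C (tno C (src C f) (src C g)) (tno C (trg C f) (trg C g))) \<and>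
     (\<forall>X\<in>ob C. \<forall>Y\<in>ob C. tna C (idm C X) (idm C Y) = idm C (tno C X Y)) \<and>
     (\<forall>f\<in>ar C. \<forall>g\<in>ar C. \<forall>f'\<in>ar C. \<forall>g'\<in>ar C. trg C f = src C f' \<longrightarrow> trg C g = src C g' \<longrightarrow>
        tna C (cmp C f' f) (cmp C g' g) = cmp C (tna C f' g') (tna C f g)) \<and>
     unt C \<in> ob C \<and>
     \<comment> \<open>associator and unitors: natural isomorphisms\<close>
     (\<forall>X\<in>ob C. \<forall>Y\<in>ob C. \<forall>Z\<in>ob C.
        asc C X Y Z \<in> hom C (tno C (tno C X Y) Z) (tno C X (tno C Y Z)) \<and> is_iso C (asc C X Y Z)) \<and>
     (\<forall>X\<in>ob C. lu C X \<in> hom C (tno C (unt C) X) X \<and> is_iso C (lu C X)) \<and>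
     (\<forall>X\<in>ob C. ru C X \<in> hom C (tno C X (unt C)) X \<and> is_iso C (ru C X)) \<and>
     (\<forall>f\<in>ar C. \<forall>g\<in>ar C. \<forall>h\<in>ar C.
        cmp C (asc C (trg C f) (trg C g) (trg C h)) (tna C (tna C f g) h) =
        cmp C (tna C f (tna C g h)) (asc C (src C f) (src C g) (src C h))) \<and>
     (\<forall>f\<in>ar C. cmp C (lu C (trg C f)) (tna C (idm C (unt C)) f) = cmp C f (lu C (src C f))) \<and>
     (\<forall>f\<in>ar C. cmp C (ru C (trg C f)) (tna C f (idm C (unt C))) = cmp C f (ru C (src C f))) \<and>
     \<comment> \<open>pentagon\<close>
     (\<forall>W\<in>ob C. \<forall>X\<in>ob C. \<forall>Y\<in>ob C. \<forall>Z\<in>ob C.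
        cmp C (asc C W X (tno C Y Z)) (asc C (tno C W X) Y Z) =
        cmp C (tna C (idm C W) (asc C X Y Z))
          (cmp C (asc C W (tno C X Y) Z) (tna C (asc C W X Y) (idm C Z)))) \<and>
     \<comment> \<open>triangle\<close>
     (\<forall>X\<in>ob C. \<forall>Y\<in>ob C.
        cmp C (tna C (idm C X) (lu C Y)) (asc C X (unt C) Y) = tna C (ru C X) (idm C Y))"

definition endofunctor ::
  "('o, 'a, 'm) cat_scheme \<Rightarrow> ('o \<Rightarrow> 'o) \<Rightarrow> ('a \<Rightarrow> 'a) \<Rightarrow> bool" where
  "endofunctor C Fo Fa \<longleftrightarrow>
     (\<forall>X\<in>ob C. Fo X \<in> ob C) \<and>
     (\<forall>f\<in>ar C. Fa f \<in> hom C (Fo (src C f)) (Fo (trg C f))) \<and>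
     (\<forall>X\<in>ob C. Fa (idm C X) = idm C (Fo X)) \<and>
     (\<forall>f\<in>ar C. \<forall>g\<in>ar C. trg C f = src C g \<longrightarrow> Fa (cmp C g f) = cmp C (Fa g) (Fa f))"

definition nat_trans ::
  "('o, 'a, 'm) cat_scheme \<Rightarrow> ('o \<Rightarrow> 'o) \<Rightarrow> ('a \<Rightarrow> 'a) \<Rightarrow> ('o \<Rightarrow> 'o) \<Rightarrow> ('a \<Rightarrow> 'a)
     \<Rightarrow> ('o \<Rightarrow> 'a) \<Rightarrow> bool" where
  "nat_trans C Fo Fa Go Ga eta \<longleftrightarrow>
     (\<forall>X\<in>ob C. eta X \<in> hom C (Fo X) (Go X)) \<and>
     (\<forall>f\<in>ar C. cmp C (eta (trg C f)) (Fa f) = cmp C (Ga f) (eta (src C f)))"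

definition comonad ::
  "('o, 'a, 'm) cat_scheme \<Rightarrow> ('o \<Rightarrow> 'o) \<Rightarrow> ('a \<Rightarrow> 'a) \<Rightarrow> ('o \<Rightarrow> 'a) \<Rightarrow> ('o \<Rightarrow> 'a) \<Rightarrow> bool" where
  "comonad C Fo Fa D e \<longleftrightarrow>
     endofunctor C Fo Fa \<and>
     nat_trans C Fo Fa (Fo \<circ> Fo) (Fa \<circ> Fa) D \<and>
     nat_trans C Fo Fa id id e \<and>
     (\<forall>X\<in>ob C. cmp C (Fa (D X)) (D X) = cmp C (D (Fo X)) (D X)) \<and>
     (\<forall>X\<in>ob C. cmp C (Fa (e X)) (D X) = idm C (Fo X)) \<and>
     (\<forall>X\<in>ob C. cmp C (e (Fo X)) (D X) = idm C (Fo X))"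

definition monoidal_functor ::
  "('o, 'a, 'm) moncat_scheme \<Rightarrow> ('o \<Rightarrow> 'o) \<Rightarrow> ('a \<Rightarrow> 'a) \<Rightarrow> ('o \<Rightarrow> 'o \<Rightarrow> 'a) \<Rightarrow> 'a \<Rightarrow> bool" where
  "monoidal_functor C Fo Fa F2 F0 \<longleftrightarrow>
     endofunctor C Fo Fa \<and>
     (\<forall>X\<in>ob C. \<forall>Y\<in>ob C. F2 X Y \<in> hom C (tno C (Fo X) (Fo Y)) (Fo (tno C X Y))) \<and>
     (\<forall>f\<in>ar C. \<forall>g\<in>ar C.
        cmp C (F2 (trg C f) (trg C g)) (tna C (Fa f) (Fa g)) =
        cmp C (Fa (tna C f g)) (F2 (src C f) (src C g))) \<and>
     F0 \<in> hom C (unt C) (Fo (unt C)) \<and>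
     (\<forall>X\<in>ob C. \<forall>Y\<in>ob C. \<forall>Z\<in>ob C.
        cmp C (Fa (asc C X Y Z)) (cmp C (F2 (tno C X Y) Z) (tna C (F2 X Y) (idm C (Fo Z)))) =
        cmp C (F2 X (tno C Y Z)) (cmp C (tna C (idm C (Fo X)) (F2 Y Z)) (asc C (Fo X) (Fo Y) (Fo Z)))) \<and>
     (\<forall>X\<in>ob C. cmp C (Fa (lu C X)) (cmp C (F2 (unt C) X) (tna C F0 (idm C (Fo X)))) = lu C (Fo X)) \<and>
     (\<forall>X\<in>ob C. cmp C (Fa (ru C X)) (cmp C (F2 X (unt C)) (tna C (idm C (Fo X)) F0)) = ru C (Fo X))"

definition bicomonad ::
  "('o, 'a, 'm) moncat_scheme \<Rightarrow> ('o \<Rightarrow> 'o) \<Rightarrow> ('a \<Rightarrow> 'a) \<Rightarrow> ('o \<Rightarrow> 'a) \<Rightarrow> ('o \<Rightarrow> 'a)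
     \<Rightarrow> ('o \<Rightarrow> 'o \<Rightarrow> 'a) \<Rightarrow> 'a \<Rightarrow> bool" where
  "bicomonad C Go Ga d e G2 G0 \<longleftrightarrow>
     comonad C Go Ga d e \<and> monoidal_functor C Go Ga G2 G0 \<and>
     (\<forall>X\<in>ob C. \<forall>Y\<in>ob C.
        cmp C (Ga (G2 X Y)) (cmp C (G2 (Go X) (Go Y)) (tna C (d X) (d Y))) =
        cmp C (d (tno C X Y)) (G2 X Y)) \<and>
     (\<forall>X\<in>ob C. \<forall>Y\<in>ob C. cmp C (e (tno C X Y)) (G2 X Y) = tna C (e X) (e Y)) \<and>
     cmp C (Ga G0) G0 = cmp C (d (unt C)) G0 \<and>
     cmp C (e (unt C)) G0 = idm C (unt C)"

definition comonad_distributive_law ::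
  "('o, 'a, 'm) cat_scheme \<Rightarrow> ('o \<Rightarrow> 'o) \<Rightarrow> ('a \<Rightarrow> 'a) \<Rightarrow> ('o \<Rightarrow> 'a) \<Rightarrow> ('o \<Rightarrow> 'a)
     \<Rightarrow> ('o \<Rightarrow> 'o) \<Rightarrow> ('a \<Rightarrow> 'a) \<Rightarrow> ('o \<Rightarrow> 'a) \<Rightarrow> ('o \<Rightarrow> 'a) \<Rightarrow> ('o \<Rightarrow> 'a) \<Rightarrow> bool" where
  "comonad_distributive_law C Fo Fa DF eF Go Ga dG eG phi \<longleftrightarrow>
     nat_trans C (Fo \<circ> Go) (Fa \<circ> Ga) (Go \<circ> Fo) (Ga \<circ> Fa) phi \<and>
     (\<forall>X\<in>ob C. cmp C (Ga (phi X)) (cmp C (phi (Go X)) (Fa (dG X))) = cmp C (dG (Fo X)) (phi X)) \<and>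
     (\<forall>X\<in>ob C. cmp C (phi (Fo X)) (cmp C (Fa (phi X)) (DF (Go X))) = cmp C (Ga (DF X)) (phi X)) \<and>
     (\<forall>X\<in>ob C. cmp C (Ga (eF X)) (phi X) = eF (Go X)) \<and>
     (\<forall>X\<in>ob C. cmp C (eG (Fo X)) (phi X) = Fa (eG X))"

definition monoidal_distributive_law ::
  "('o, 'a, 'm) moncat_scheme \<Rightarrow> ('o \<Rightarrow> 'o) \<Rightarrow> ('a \<Rightarrow> 'a) \<Rightarrow> ('o \<Rightarrow> 'o \<Rightarrow> 'a) \<Rightarrow> 'a
     \<Rightarrow> ('o \<Rightarrow> 'o) \<Rightarrow> ('a \<Rightarrow> 'a) \<Rightarrow> ('o \<Rightarrow> 'o \<Rightarrow> 'a) \<Rightarrow> 'a \<Rightarrow> ('o \<Rightarrow> 'a) \<Rightarrow> bool" where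
  "monoidal_distributive_law C Fo Fa F2 F0 Go Ga G2 G0 phi \<longleftrightarrow>
     (\<forall>M\<in>ob C. \<forall>N\<in>ob C.
        cmp C (phi (tno C M N)) (cmp C (Fa (G2 M N)) (F2 (Go M) (Go N))) =
        cmp C (Ga (F2 M N)) (cmp C (G2 (Fo M) (Fo N)) (tna C (phi M) (phi N)))) \<and>
     cmp C (phi (unt C)) (cmp C (Fa G0) F0) = cmp C (Ga F0) G0"

end

theory Submission
  imports Defs
begin

lemma ef_facts:
  assumes "endofunctor C Fo Fa"
  shows ef_ob: "X \<in> ob C \<Longrightarrow> Fo X \<in> ob C"
    and ef_ar: "f \<in> ar C \<Longrightarrow> Fa f \<in> ar C"
    and ef_src: "f \<in> ar C \<Longrightarrow> src C (Fa f) = Fo (src C f)"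
    and ef_trg: "f \<in> ar C \<Longrightarrow> trg C (Fa f) = Fo (trg C f)"
    and ef_id: "X \<in> ob C \<Longrightarrow> Fa (idm C X) = idm C (Fo X)"
    and ef_cmp: "f \<in> ar C \<Longrightarrow> g \<in> ar C \<Longrightarrow> trg C f = src C g \<Longrightarrow> Fa (cmp C g f) = cmp C (Fa g) (Fa f)"
  using assms unfolding endofunctor_def hom_def by auto

lemma nt_facts:
  assumes "nat_trans C Fo Fa Go Ga eta"
  shows nt_ar: "X \<in> ob C \<Longrightarrow> eta X \<in> ar C"
    and nt_src: "X \<in> ob C \<Longrightarrow> src C (eta X) = Fo X"
    and nt_trg: "X \<in> ob C \<Longrightarrow> trg C (eta X) = Go X"
    and nt_nat: "f \<in> ar C \<Longrightarrow> trg C f = B \<Longrightarrow> cmp C (eta B) (Fa f) = cmp C (Ga f) (eta (src C f))"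
  using assms unfolding nat_trans_def hom_def by auto

lemma com_facts:
  assumes "comonad C Fo Fa D e"
  shows "endofunctor C Fo Fa" "nat_trans C Fo Fa (Fo \<circ> Fo) (Fa \<circ> Fa) D" "nat_trans C Fo Fa id id e"
    and com_coass: "X \<in> ob C \<Longrightarrow> cmp C (Fa (D X)) (D X) = cmp C (D (Fo X)) (D X)"
    and com_cu1: "X \<in> ob C \<Longrightarrow> cmp C (Fa (e X)) (D X) = idm C (Fo X)"
    and com_cu2: "X \<in> ob C \<Longrightarrow> cmp C (e (Fo X)) (D X) = idm C (Fo X)"
  using assms unfolding comonad_def by auto

lemma mf_facts:
  assumes "monoidal_functor C Fo Fa F2 F0"
  shows "endofunctor C Fo Fa"
    and mf_2ar: "X \<in> ob C \<Longrightarrow> Y \<in> ob C \<Longrightarrow> F2 X Y \<in> ar C"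
    and mf_2src: "X \<in> ob C \<Longrightarrow> Y \<in> ob C \<Longrightarrow> src C (F2 X Y) = tno C (Fo X) (Fo Y)"
    and mf_2trg: "X \<in> ob C \<Longrightarrow> Y \<in> ob C \<Longrightarrow> trg C (F2 X Y) = Fo (tno C X Y)"
    and mf_nat: "f \<in> ar C \<Longrightarrow> g \<in> ar C \<Longrightarrow> trg C f = A \<Longrightarrow> trg C g = B \<Longrightarrow>
        cmp C (F2 A B) (tna C (Fa f) (Fa g)) = cmp C (Fa (tna C f g)) (F2 (src C f) (src C g))"
    and mf_0ar: "F0 \<in> ar C" and mf_0src: "src C F0 = unt C" and mf_0trg: "trg C F0 = Fo (unt C)"
    and mf_asc: "X\<in>ob C \<Longrightarrow> Y\<in>ob C \<Longrightarrow> Z\<in>ob C \<Longrightarrow>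
        cmp C (Fa (asc C X Y Z)) (cmp C (F2 (tno C X Y) Z) (tna C (F2 X Y) (idm C (Fo Z)))) =
        cmp C (F2 X (tno C Y Z)) (cmp C (tna C (idm C (Fo X)) (F2 Y Z)) (asc C (Fo X) (Fo Y) (Fo Z)))"
    and mf_lu: "X\<in>ob C \<Longrightarrow> cmp C (Fa (lu C X)) (cmp C (F2 (unt C) X) (tna C F0 (idm C (Fo X)))) = lu C (Fo X)"
    and mf_ru: "X\<in>ob C \<Longrightarrow> cmp C (Fa (ru C X)) (cmp C (F2 X (unt C)) (tna C (idm C (Fo X)) F0)) = ru C (Fo X)"
  using assms unfolding monoidal_functor_def hom_def by auto

lemma bc_facts:
  assumes "bicomonad C Go Ga d e G2 G0"
  shows "comonad C Go Ga d e" "monoidal_functor C Go Ga G2 G0"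
    and bc_d2: "X\<in>ob C \<Longrightarrow> Y\<in>ob C \<Longrightarrow> cmp C (Ga (G2 X Y)) (cmp C (G2 (Go X) (Go Y)) (tna C (d X) (d Y))) =
        cmp C (d (tno C X Y)) (G2 X Y)"
    and bc_e2: "X\<in>ob C \<Longrightarrow> Y\<in>ob C \<Longrightarrow> cmp C (e (tno C X Y)) (G2 X Y) = tna C (e X) (e Y)"
    and bc_d0: "cmp C (Ga G0) G0 = cmp C (d (unt C)) G0"
    and bc_e0: "cmp C (e (unt C)) G0 = idm C (unt C)"
  using assms unfolding bicomonad_def by auto

lemma tail2: "cmp C a b = c \<Longrightarrow> a \<in> ar C \<Longrightarrow> b \<in> ar C \<Longrightarrow> trg C b = src C a \<Longrightarrow>
   r \<in> ar C \<Longrightarrow> trg C r = src C b \<Longrightarrow> category C \<Longrightarrow> cmp C a (cmp C b r) = cmp C c r"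
  unfolding category_def by metis

lemma tail3: "cmp C a (cmp C b c) = d \<Longrightarrow> a \<in> ar C \<Longrightarrow> b \<in> ar C \<Longrightarrow> c \<in> ar C \<Longrightarrow> trg C b = src C a \<Longrightarrow>
   trg C c = src C b \<Longrightarrow> r \<in> ar C \<Longrightarrow> trg C r = src C c \<Longrightarrow> category C \<Longrightarrow>
   cmp C a (cmp C b (cmp C c r)) = cmp C d r"
  unfolding category_def hom_def by (smt (verit) mem_Collect_eq)

lemma cat_facts:
  assumes "category C"
  shows cat_srcob: "f \<in> ar C \<Longrightarrow> src C f \<in> ob C"
    and cat_trgob: "f \<in> ar C \<Longrightarrow> trg C f \<in> ob C"
    and cat_idar: "X \<in> ob C \<Longrightarrow> idm C X \<in> ar C"
    and cat_idsrc: "X \<in> ob C \<Longrightarrow> src C (idm C X) = X"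
    and cat_idtrg: "X \<in> ob C \<Longrightarrow> trg C (idm C X) = X"
    and cat_cmpar: "f \<in> ar C \<Longrightarrow> g \<in> ar C \<Longrightarrow> trg C f = src C g \<Longrightarrow> cmp C g f \<in> ar C"
    and cat_cmpsrc: "f \<in> ar C \<Longrightarrow> g \<in> ar C \<Longrightarrow> trg C f = src C g \<Longrightarrow> src C (cmp C g f) = src C f"
    and cat_cmptrg: "f \<in> ar C \<Longrightarrow> g \<in> ar C \<Longrightarrow> trg C f = src C g \<Longrightarrow> trg C (cmp C g f) = trg C g"
    and cat_idl: "f \<in> ar C \<Longrightarrow> trg C f = X \<Longrightarrow> cmp C (idm C X) f = f"
    and cat_idr: "f \<in> ar C \<Longrightarrow> src C f = X \<Longrightarrow> cmp C f (idm C X) = f"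
    and cat_assoc: "f \<in> ar C \<Longrightarrow> g \<in> ar C \<Longrightarrow> h \<in> ar C \<Longrightarrow> trg C f = src C g \<Longrightarrow> trg C g = src C h \<Longrightarrow>
        cmp C (cmp C h g) f = cmp C h (cmp C g f)"
  using assms unfolding category_def hom_def by auto

lemma mc_facts:
  assumes "monoidal_category C"
  shows "category C"
    and mc_tnoob: "X \<in> ob C \<Longrightarrow> Y \<in> ob C \<Longrightarrow> tno C X Y \<in> ob C"
    and mc_untob: "unt C \<in> ob C"
    and mc_tnaar: "f \<in> ar C \<Longrightarrow> g \<in> ar C \<Longrightarrow> tna C f g \<in> ar C"
    and mc_tnasrc: "f \<in> ar C \<Longrightarrow> g \<in> ar C \<Longrightarrow> src C (tna C f g) = tno C (src C f) (src C g)"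
    and mc_tnatrg: "f \<in> ar C \<Longrightarrow> g \<in> ar C \<Longrightarrow> trg C (tna C f g) = tno C (trg C f) (trg C g)"
    and mc_tnaid: "X \<in> ob C \<Longrightarrow> Y \<in> ob C \<Longrightarrow> tna C (idm C X) (idm C Y) = idm C (tno C X Y)"
    and mc_interchange: "f\<in>ar C \<Longrightarrow> g\<in>ar C \<Longrightarrow> f'\<in>ar C \<Longrightarrow> g'\<in>ar C \<Longrightarrow> trg C f = src C f' \<Longrightarrow> trg C g = src C g' \<Longrightarrow>
        tna C (cmp C f' f) (cmp C g' g) = cmp C (tna C f' g') (tna C f g)"
    and mc_ascar: "X \<in> ob C \<Longrightarrow> Y \<in> ob C \<Longrightarrow> Z \<in> ob C \<Longrightarrow> asc C X Y Z \<in> ar C"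
    and mc_ascsrc: "X \<in> ob C \<Longrightarrow> Y \<in> ob C \<Longrightarrow> Z \<in> ob C \<Longrightarrow> src C (asc C X Y Z) = tno C (tno C X Y) Z"
    and mc_asctrg: "X \<in> ob C \<Longrightarrow> Y \<in> ob C \<Longrightarrow> Z \<in> ob C \<Longrightarrow> trg C (asc C X Y Z) = tno C X (tno C Y Z)"
    and mc_luar: "X \<in> ob C \<Longrightarrow> lu C X \<in> ar C"
    and mc_lusrc: "X \<in> ob C \<Longrightarrow> src C (lu C X) = tno C (unt C) X"
    and mc_lutrg: "X \<in> ob C \<Longrightarrow> trg C (lu C X) = X"
    and mc_ruar: "X \<in> ob C \<Longrightarrow> ru C X \<in> ar C"
    and mc_rusrc: "X \<in> ob C \<Longrightarrow> src C (ru C X) = tno C X (unt C)"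
    and mc_rutrg: "X \<in> ob C \<Longrightarrow> trg C (ru C X) = X"
  using assms unfolding monoidal_category_def hom_def is_iso_def by auto

locale S =
  fixes C :: "('o, 'a, 'm) moncat_scheme"
    and Fo :: "'o \<Rightarrow> 'o" and Fa :: "'a \<Rightarrow> 'a" and DF eF :: "'o \<Rightarrow> 'a" and F2 :: "'o \<Rightarrow> 'o \<Rightarrow> 'a" and F0 :: 'a
    and Go :: "'o \<Rightarrow> 'o" and Ga :: "'a \<Rightarrow> 'a" and dG eG :: "'o \<Rightarrow> 'a" and G2 :: "'o \<Rightarrow> 'o \<Rightarrow> 'a" and G0 :: 'a
    and phi :: "'o \<Rightarrow> 'a"
  assumes MC: "monoidal_category C"
    and BF: "bicomonad C Fo Fa DF eF F2 F0"
    and BG: "bicomonad C Go Ga dG eG G2 G0"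
    and DL: "comonad_distributive_law C Fo Fa DF eF Go Ga dG eG phi"
begin

abbreviation cp (infixr "\<cdot>" 55) where "g \<cdot> f \<equiv> cmp C g f"
abbreviation tn (infixr "\<otimes>" 60) where "f \<otimes> g \<equiv> tna C f g"

lemma CC: "category C" using mc_facts(1)[OF MC] .
lemma Fcom: "comonad C Fo Fa DF eF" using bc_facts(1)[OF BF] .
lemma Gcom: "comonad C Go Ga dG eG" using bc_facts(1)[OF BG] .
lemma Fmf: "monoidal_functor C Fo Fa F2 F0" using bc_facts(2)[OF BF] .
lemma Gmf: "monoidal_functor C Go Ga G2 G0" using bc_facts(2)[OF BG] .
lemma Fef: "endofunctor C Fo Fa" using com_facts(1)[OF Fcom] .
lemma Gef: "endofunctor C Go Ga" using com_facts(1)[OF Gcom] .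
lemma phint: "nat_trans C (Fo \<circ> Go) (Fa \<circ> Ga) (Go \<circ> Fo) (Ga \<circ> Fa) phi"
  using DL unfolding comonad_distributive_law_def by auto

lemmas ty[simp] = cat_srcob[OF CC] cat_trgob[OF CC] cat_idar[OF CC] cat_idsrc[OF CC] cat_idtrg[OF CC]
  cat_cmpar[OF CC] cat_cmpsrc[OF CC] cat_cmptrg[OF CC]
  mc_tnoob[OF MC] mc_untob[OF MC] mc_tnaar[OF MC] mc_tnasrc[OF MC] mc_tnatrg[OF MC]
  mc_ascar[OF MC] mc_ascsrc[OF MC] mc_asctrg[OF MC] mc_luar[OF MC] mc_lusrc[OF MC] mc_lutrg[OF MC]
  mc_ruar[OF MC] mc_rusrc[OF MC] mc_rutrg[OF MC]
  ef_ob[OF Fef] ef_ar[OF Fef] ef_src[OF Fef] ef_trg[OF Fef]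
  ef_ob[OF Gef] ef_ar[OF Gef] ef_src[OF Gef] ef_trg[OF Gef]
  nt_ar[OF com_facts(2)[OF Fcom]] nt_src[OF com_facts(2)[OF Fcom]] nt_trg[OF com_facts(2)[OF Fcom], simplified]
  nt_ar[OF com_facts(3)[OF Fcom]] nt_src[OF com_facts(3)[OF Fcom]] nt_trg[OF com_facts(3)[OF Fcom], simplified]
  nt_ar[OF com_facts(2)[OF Gcom]] nt_src[OF com_facts(2)[OF Gcom]] nt_trg[OF com_facts(2)[OF Gcom], simplified]
  nt_ar[OF com_facts(3)[OF Gcom]] nt_src[OF com_facts(3)[OF Gcom]] nt_trg[OF com_facts(3)[OF Gcom], simplified]
  nt_ar[OF phint] nt_src[OF phint, simplified] nt_trg[OF phint, simplified]
  mf_2ar[OF Fmf] mf_2src[OF Fmf] mf_2trg[OF Fmf] mf_0ar[OF Fmf] mf_0src[OF Fmf] mf_0trg[OF Fmf]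
  mf_2ar[OF Gmf] mf_2src[OF Gmf] mf_2trg[OF Gmf] mf_0ar[OF Gmf] mf_0src[OF Gmf] mf_0trg[OF Gmf]

lemmas nrm[simp] = cat_idl[OF CC] cat_idr[OF CC] cat_assoc[OF CC]
  ef_id[OF Fef] ef_cmp[OF Fef] ef_id[OF Gef] ef_cmp[OF Gef] mc_tnaid[OF MC]

lemmas DF_nat = nt_nat[OF com_facts(2)[OF Fcom], simplified]
lemmas eF_nat = nt_nat[OF com_facts(3)[OF Fcom], simplified]
lemmas dG_nat = nt_nat[OF com_facts(2)[OF Gcom], simplified]
lemmas eG_nat = nt_nat[OF com_facts(3)[OF Gcom], simplified]
lemmas phi_nat = nt_nat[OF phint, simplified]
lemmas F2_nat = mf_nat[OF Fmf]
lemmas G2_nat = mf_nat[OF Gmf]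


declare CC[simp]

lemma Fimg2: "a \<cdot> b = c \<Longrightarrow> a \<in> ar C \<Longrightarrow> b \<in> ar C \<Longrightarrow> trg C b = src C a \<Longrightarrow> Fa a \<cdot> Fa b = Fa c"
  by (metis ef_cmp[OF Fef])
lemma Gimg2: "a \<cdot> b = c \<Longrightarrow> a \<in> ar C \<Longrightarrow> b \<in> ar C \<Longrightarrow> trg C b = src C a \<Longrightarrow> Ga a \<cdot> Ga b = Ga c"
  by (metis ef_cmp[OF Gef])

lemma DF_nat_r: "f \<in> ar C \<Longrightarrow> src C f = A \<Longrightarrow> Fa (Fa f) \<cdot> DF A = DF (trg C f) \<cdot> Fa f"
  using DF_nat by metis
lemma phi_nat_r: "f \<in> ar C \<Longrightarrow> src C f = A \<Longrightarrow> Ga (Fa f) \<cdot> phi A = phi (trg C f) \<cdot> Fa (Ga f)"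
  using phi_nat by metis
lemma eF_nat_r: "f \<in> ar C \<Longrightarrow> src C f = A \<Longrightarrow> f \<cdot> eF A = eF (trg C f) \<cdot> Fa f"
  using eF_nat by metis

lemma DL1: "X \<in> ob C \<Longrightarrow> Ga (phi X) \<cdot> phi (Go X) \<cdot> Fa (dG X) = dG (Fo X) \<cdot> phi X"
  and DL2: "X \<in> ob C \<Longrightarrow> phi (Fo X) \<cdot> Fa (phi X) \<cdot> DF (Go X) = Ga (DF X) \<cdot> phi X"
  and DL3: "X \<in> ob C \<Longrightarrow> Ga (eF X) \<cdot> phi X = eF (Go X)"
  and DL4: "X \<in> ob C \<Longrightarrow> eG (Fo X) \<cdot> phi X = Fa (eG X)"
  using DL unfolding comonad_distributive_law_def by auto

lemmas F_coass = com_coass[OF Fcom] and F_cu1 = com_cu1[OF Fcom] and F_cu2 = com_cu2[OF Fcom]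
lemmas G_coass = com_coass[OF Gcom] and G_cu1 = com_cu1[OF Gcom] and G_cu2 = com_cu2[OF Gcom]

lemma D_alt: "X \<in> ob C \<Longrightarrow> Fa (phi (Go X)) \<cdot> Fa (Fa (dG X)) \<cdot> DF (Go X) = Fa (phi (Go X)) \<cdot> DF (Go (Go X)) \<cdot> Fa (dG X)"
  by (simp add: DF_nat)

lemma coass_alt: assumes X: "X \<in> ob C"
  shows "Fa (Ga (Fa (phi (Go X)) \<cdot> DF (Go (Go X)) \<cdot> Fa (dG X))) \<cdot> (Fa (phi (Go X)) \<cdot> DF (Go (Go X)) \<cdot> Fa (dG X))
   = (Fa (phi (Go (Fo (Go X)))) \<cdot> DF (Go (Go (Fo (Go X)))) \<cdot> Fa (dG (Fo (Go X)))) \<cdot> (Fa (phi (Go X)) \<cdot> DF (Go (Go X)) \<cdot> Fa (dG X))"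
proof -
  let ?g = "Go X" let ?gg = "Go (Go X)" let ?ggg = "Go (Go (Go X))"
  have "Fa (Ga (Fa (phi (Go X)) \<cdot> DF (Go (Go X)) \<cdot> Fa (dG X))) \<cdot> (Fa (phi (Go X)) \<cdot> DF (Go (Go X)) \<cdot> Fa (dG X))
    = Fa (Ga (Fa (phi ?g))) \<cdot> Fa (Ga (DF ?gg)) \<cdot> Fa (phi ?gg) \<cdot> Fa (Fa (Ga (dG X))) \<cdot> DF ?gg \<cdot> Fa (dG X)"
    using X by (simp add: Fimg2[OF phi_nat_r] tail2[OF Fimg2[OF phi_nat_r]])
  also have "... = Fa (Ga (Fa (phi ?g))) \<cdot> Fa (phi (Fo ?gg)) \<cdot> Fa (Fa (phi ?gg)) \<cdot> Fa (DF ?ggg) \<cdot> Fa (Fa (Ga (dG X))) \<cdot> DF ?gg \<cdot> Fa (dG X)"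
    using X by (simp add: tail2[OF Fimg2[OF DL2[THEN sym]]])
  also have "... = Fa (Ga (Fa (phi ?g))) \<cdot> Fa (phi (Fo ?gg)) \<cdot> Fa (Fa (phi ?gg)) \<cdot> Fa (Fa (Fa (Ga (dG X)))) \<cdot> Fa (DF ?gg) \<cdot> DF ?gg \<cdot> Fa (dG X)"
    using X by (simp add: tail2[OF Fimg2[OF DF_nat]])
  also have "... = Fa (Ga (Fa (phi ?g))) \<cdot> Fa (phi (Fo ?gg)) \<cdot> Fa (Fa (phi ?gg)) \<cdot> Fa (Fa (Fa (Ga (dG X)))) \<cdot> DF (Fo ?gg) \<cdot> DF ?gg \<cdot> Fa (dG X)"
    using X by (simp add: tail2[OF F_coass])
  also have "... = Fa (Ga (Fa (phi ?g))) \<cdot> Fa (phi (Fo ?gg)) \<cdot> Fa (Fa (phi ?gg)) \<cdot> DF (Fo ?ggg) \<cdot> Fa (Fa (Ga (dG X))) \<cdot> DF ?gg \<cdot> Fa (dG X)"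
    using X by (simp add: tail2[OF DF_nat_r])
  also have "... = Fa (Ga (Fa (phi ?g))) \<cdot> Fa (phi (Fo ?gg)) \<cdot> Fa (Fa (phi ?gg)) \<cdot> DF (Fo ?ggg) \<cdot> DF ?ggg \<cdot> Fa (Ga (dG X)) \<cdot> Fa (dG X)"
    using X by (simp add: tail2[OF DF_nat_r])
  also have "... = Fa (Ga (Fa (phi ?g))) \<cdot> Fa (phi (Fo ?gg)) \<cdot> Fa (Fa (phi ?gg)) \<cdot> DF (Fo ?ggg) \<cdot> DF ?ggg \<cdot> Fa (dG ?g) \<cdot> Fa (dG X)"
    using X by (simp add: tail2[OF Fimg2[OF G_coass]] Fimg2[OF G_coass])
  finally have L: "Fa (Ga (Fa (phi (Go X)) \<cdot> DF (Go (Go X)) \<cdot> Fa (dG X))) \<cdot> (Fa (phi (Go X)) \<cdot> DF (Go (Go X)) \<cdot> Fa (dG X))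
    = Fa (Ga (Fa (phi ?g))) \<cdot> Fa (phi (Fo ?gg)) \<cdot> Fa (Fa (phi ?gg)) \<cdot> DF (Fo ?ggg) \<cdot> DF ?ggg \<cdot> Fa (dG ?g) \<cdot> Fa (dG X)" .
  let ?y = "Fo (Go X)"
  have "(Fa (phi (Go (Fo (Go X)))) \<cdot> DF (Go (Go (Fo (Go X)))) \<cdot> Fa (dG (Fo (Go X)))) \<cdot> (Fa (phi (Go X)) \<cdot> DF (Go (Go X)) \<cdot> Fa (dG X))
     = Fa (phi (Go ?y)) \<cdot> DF (Go (Go ?y)) \<cdot> Fa (Ga (phi ?g)) \<cdot> Fa (phi ?gg) \<cdot> Fa (Fa (dG ?g)) \<cdot> DF ?gg \<cdot> Fa (dG X)"
    using X by (simp add: tail2[OF Fimg2[OF DL1[THEN sym]]])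
  also have "... = Fa (phi (Go ?y)) \<cdot> Fa (Fa (Ga (phi ?g))) \<cdot> DF (Go (Fo ?gg)) \<cdot> Fa (phi ?gg) \<cdot> Fa (Fa (dG ?g)) \<cdot> DF ?gg \<cdot> Fa (dG X)"
    using X by (simp add: tail2[OF DF_nat])
  also have "... = Fa (phi (Go ?y)) \<cdot> Fa (Fa (Ga (phi ?g))) \<cdot> Fa (Fa (phi ?gg)) \<cdot> DF (Fo ?ggg) \<cdot> Fa (Fa (dG ?g)) \<cdot> DF ?gg \<cdot> Fa (dG X)"
    using X by (simp add: tail2[OF DF_nat])
  also have "... = Fa (phi (Go ?y)) \<cdot> Fa (Fa (Ga (phi ?g))) \<cdot> Fa (Fa (phi ?gg)) \<cdot> DF (Fo ?ggg) \<cdot> DF ?ggg \<cdot> Fa (dG ?g) \<cdot> Fa (dG X)"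
    using X by (simp add: tail2[OF DF_nat_r])
  also have "... = Fa (Ga (Fa (phi ?g))) \<cdot> Fa (phi (Fo ?gg)) \<cdot> Fa (Fa (phi ?gg)) \<cdot> DF (Fo ?ggg) \<cdot> DF ?ggg \<cdot> Fa (dG ?g) \<cdot> Fa (dG X)"
    using X by (simp add: tail2[OF Fimg2[OF phi_nat]])
  finally show ?thesis using L by simp
qed

lemma D_nat: assumes f: "f \<in> ar C"
  shows "Fa (phi (Go (trg C f))) \<cdot> Fa (Fa (dG (trg C f))) \<cdot> DF (Go (trg C f)) \<cdot> Fa (Ga f) =
         Fa (Ga (Fa (Ga f))) \<cdot> Fa (phi (Go (src C f))) \<cdot> Fa (Fa (dG (src C f))) \<cdot> DF (Go (src C f))"
proof -
  have "Fa (phi (Go (trg C f))) \<cdot> Fa (Fa (dG (trg C f))) \<cdot> DF (Go (trg C f)) \<cdot> Fa (Ga f) =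
        Fa (phi (Go (trg C f))) \<cdot> Fa (Fa (dG (trg C f))) \<cdot> Fa (Fa (Ga f)) \<cdot> DF (Go (src C f))"
    using f by (simp add: DF_nat)
  also have "... = Fa (phi (Go (trg C f))) \<cdot> Fa (Fa (Ga (Ga f))) \<cdot> Fa (Fa (dG (src C f))) \<cdot> DF (Go (src C f))"
    using f by (simp add: tail2[OF Fimg2[OF Fimg2[OF dG_nat]]])
  also have "... = Fa (Ga (Fa (Ga f))) \<cdot> Fa (phi (Go (src C f))) \<cdot> Fa (Fa (dG (src C f))) \<cdot> DF (Go (src C f))"
    using f by (simp add: tail2[OF Fimg2[OF phi_nat]])
  finally show ?thesis .
qed

lemma e_nat: "f \<in> ar C \<Longrightarrow> eG (trg C f) \<cdot> eF (Go (trg C f)) \<cdot> Fa (Ga f) = f \<cdot> eG (src C f) \<cdot> eF (Go (src C f))"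
  by (simp add: eF_nat tail2[OF eG_nat])

lemma FG_cu1: assumes X: "X \<in> ob C"
  shows "Fa (Ga (eG X)) \<cdot> Fa (Ga (eF (Go X))) \<cdot> Fa (phi (Go X)) \<cdot> Fa (Fa (dG X)) \<cdot> DF (Go X) = idm C (Fo (Go X))"
proof -
  have "Fa (Ga (eG X)) \<cdot> Fa (Ga (eF (Go X))) \<cdot> Fa (phi (Go X)) \<cdot> Fa (Fa (dG X)) \<cdot> DF (Go X)
     = Fa (Ga (eG X)) \<cdot> Fa (eF (Go (Go X))) \<cdot> Fa (Fa (dG X)) \<cdot> DF (Go X)"
    using X by (simp add: tail2[OF Fimg2[OF DL3]])
  also have "... = Fa (Ga (eG X)) \<cdot> Fa (dG X) \<cdot> Fa (eF (Go X)) \<cdot> DF (Go X)"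
    using X by (simp add: tail2[OF Fimg2[OF eF_nat]])
  also have "... = Fa (Ga (eG X)) \<cdot> Fa (dG X)"
    using X by (simp add: F_cu1)
  also have "... = idm C (Fo (Go X))"
    using X by (simp add: Fimg2[OF G_cu1])
  finally show ?thesis .
qed

lemma FG_cu2: assumes X: "X \<in> ob C"
  shows "eG (Fo (Go X)) \<cdot> eF (Go (Fo (Go X))) \<cdot> Fa (phi (Go X)) \<cdot> Fa (Fa (dG X)) \<cdot> DF (Go X) = idm C (Fo (Go X))"
proof -
  have "eG (Fo (Go X)) \<cdot> eF (Go (Fo (Go X))) \<cdot> Fa (phi (Go X)) \<cdot> Fa (Fa (dG X)) \<cdot> DF (Go X)
     = eG (Fo (Go X)) \<cdot> phi (Go X) \<cdot> eF (Fo (Go (Go X))) \<cdot> Fa (Fa (dG X)) \<cdot> DF (Go X)"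
    using X by (simp add: tail2[OF eF_nat])
  also have "... = eG (Fo (Go X)) \<cdot> phi (Go X) \<cdot> Fa (dG X) \<cdot> eF (Fo (Go X)) \<cdot> DF (Go X)"
    using X by (simp add: tail2[OF eF_nat])
  also have "... = Fa (eG (Go X)) \<cdot> Fa (dG X)"
    using X by (simp add: F_cu2 tail2[OF DL4])
  also have "... = idm C (Fo (Go X))"
    using X by (simp add: Fimg2[OF G_cu2])
  finally show ?thesis .
qed

lemma FG_coass: assumes X: "X \<in> ob C"
  shows "Fa (Ga (Fa (phi (Go X)) \<cdot> Fa (Fa (dG X)) \<cdot> DF (Go X))) \<cdot> Fa (phi (Go X)) \<cdot> Fa (Fa (dG X)) \<cdot> DF (Go X) =
    (Fa (phi (Go (Fo (Go X)))) \<cdot> Fa (Fa (dG (Fo (Go X)))) \<cdot> DF (Go (Fo (Go X)))) \<cdot> Fa (phi (Go X)) \<cdot> Fa (Fa (dG X)) \<cdot> DF (Go X)"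
    using coass_alt[OF X] X by (simp only: D_alt ty)

lemma FG_ef: "endofunctor C (Fo \<circ> Go) (Fa \<circ> Ga)"
  unfolding endofunctor_def hom_def by simp

lemma FG_comonad: "comonad C (Fo \<circ> Go) (Fa \<circ> Ga)
           (\<lambda>X. Fa (phi (Go X)) \<cdot> Fa (Fa (dG X)) \<cdot> DF (Go X))
           (\<lambda>X. eG X \<cdot> eF (Go X))"
  unfolding comonad_def nat_trans_def hom_def
  apply (intro conjI FG_ef ballI)
        apply (simp_all only: o_apply id_apply)
        apply simp
       apply (simp add: D_nat)
      apply simp
     apply (simp add: e_nat)
    apply (erule FG_coass)
   apply (simp add: FG_cu1)
  apply (simp add: FG_cu2)
  done


lemma tsplit_l[simp]: "p \<in> ar C \<Longrightarrow> q \<in> ar C \<Longrightarrow> trg C q = src C p \<Longrightarrow> W \<in> ob C \<Longrightarrow>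
  (p \<cdot> q) \<otimes> idm C W = (p \<otimes> idm C W) \<cdot> (q \<otimes> idm C W)"
  using mc_interchange[OF MC, of q "idm C W" p "idm C W"] by simp
lemma tsplit_r[simp]: "p \<in> ar C \<Longrightarrow> q \<in> ar C \<Longrightarrow> trg C q = src C p \<Longrightarrow> W \<in> ob C \<Longrightarrow>
  idm C W \<otimes> (p \<cdot> q) = (idm C W \<otimes> p) \<cdot> (idm C W \<otimes> q)"
  using mc_interchange[OF MC, of "idm C W" q "idm C W" p] by simp

lemma Fimg3: "a \<cdot> b \<cdot> c = d \<Longrightarrow> a \<in> ar C \<Longrightarrow> b \<in> ar C \<Longrightarrow> c \<in> ar C \<Longrightarrow> trg C b = src C a \<Longrightarrow> trg C c = src C b
   \<Longrightarrow> Fa a \<cdot> Fa b \<cdot> Fa c = Fa d"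
  by (drule sym) simp
lemma Gimg3: "a \<cdot> b \<cdot> c = d \<Longrightarrow> a \<in> ar C \<Longrightarrow> b \<in> ar C \<Longrightarrow> c \<in> ar C \<Longrightarrow> trg C b = src C a \<Longrightarrow> trg C c = src C b
   \<Longrightarrow> Ga a \<cdot> Ga b \<cdot> Ga c = Ga d"
  by (drule sym) simp

lemma F2_nat_id1: "f \<in> ar C \<Longrightarrow> trg C f = A \<Longrightarrow> B \<in> ob C \<Longrightarrow>
   F2 A B \<cdot> (Fa f \<otimes> idm C (Fo B)) = Fa (f \<otimes> idm C B) \<cdot> F2 (src C f) B"
  using F2_nat[of f "idm C B" A B] by simp
lemma F2_nat_id2: "g \<in> ar C \<Longrightarrow> src C g = B \<Longrightarrow> A \<in> ob C \<Longrightarrow>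
   Fa (idm C A \<otimes> g) \<cdot> F2 A B = F2 A (trg C g) \<cdot> (idm C (Fo A) \<otimes> Fa g)"
  using F2_nat[of "idm C A" g A "trg C g"] by simp
lemma F2_nat_id2': "g \<in> ar C \<Longrightarrow> trg C g = B \<Longrightarrow> A \<in> ob C \<Longrightarrow>
   F2 A B \<cdot> (idm C (Fo A) \<otimes> Fa g) = Fa (idm C A \<otimes> g) \<cdot> F2 A (src C g)"
  using F2_nat[of "idm C A" g A B] by simp

lemmas F_asc = mf_asc[OF Fmf] and F_lu = mf_lu[OF Fmf] and F_ru = mf_ru[OF Fmf]
lemmas G_asc = mf_asc[OF Gmf] and G_lu = mf_lu[OF Gmf] and G_ru = mf_ru[OF Gmf]


lemma FG2_nat: "f \<in> ar C \<Longrightarrow> g \<in> ar C \<Longrightarrow>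
   Fa (G2 (trg C f) (trg C g)) \<cdot> F2 (Go (trg C f)) (Go (trg C g)) \<cdot> (Fa (Ga f) \<otimes> Fa (Ga g))
   = Fa (Ga (f \<otimes> g)) \<cdot> Fa (G2 (src C f) (src C g)) \<cdot> F2 (Go (src C f)) (Go (src C g))"
  by (simp add: F2_nat tail2[OF Fimg2[OF G2_nat]])

lemma FG_asc: assumes X: "X \<in> ob C" and Y: "Y \<in> ob C" and Z: "Z \<in> ob C"
  shows "Fa (Ga (asc C X Y Z)) \<cdot> (Fa (G2 (tno C X Y) Z) \<cdot> F2 (Go (tno C X Y)) (Go Z)) \<cdot> ((Fa (G2 X Y) \<cdot> F2 (Go X) (Go Y)) \<otimes> idm C (Fo (Go Z)))
   = (Fa (G2 X (tno C Y Z)) \<cdot> F2 (Go X) (Go (tno C Y Z))) \<cdot> (idm C (Fo (Go X)) \<otimes> (Fa (G2 Y Z) \<cdot> F2 (Go Y) (Go Z))) \<cdot> asc C (Fo (Go X)) (Fo (Go Y)) (Fo (Go Z))"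
proof -
  have "Fa (Ga (asc C X Y Z)) \<cdot> (Fa (G2 (tno C X Y) Z) \<cdot> F2 (Go (tno C X Y)) (Go Z)) \<cdot> ((Fa (G2 X Y) \<cdot> F2 (Go X) (Go Y)) \<otimes> idm C (Fo (Go Z)))
     = Fa (Ga (asc C X Y Z)) \<cdot> Fa (G2 (tno C X Y) Z) \<cdot> Fa (G2 X Y \<otimes> idm C (Go Z)) \<cdot> F2 (tno C (Go X) (Go Y)) (Go Z) \<cdot> (F2 (Go X) (Go Y) \<otimes> idm C (Fo (Go Z)))"
    using X Y Z by (simp add: tail2[OF F2_nat_id1])
  also have "... = Fa (G2 X (tno C Y Z)) \<cdot> Fa (idm C (Go X) \<otimes> G2 Y Z) \<cdot> Fa (asc C (Go X) (Go Y) (Go Z)) \<cdot> F2 (tno C (Go X) (Go Y)) (Go Z) \<cdot> (F2 (Go X) (Go Y) \<otimes> idm C (Fo (Go Z)))"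
    using X Y Z by (simp add: tail3[OF Fimg3[OF G_asc]])
  also have "... = Fa (G2 X (tno C Y Z)) \<cdot> Fa (idm C (Go X) \<otimes> G2 Y Z) \<cdot> F2 (Go X) (tno C (Go Y) (Go Z)) \<cdot> (idm C (Fo (Go X)) \<otimes> F2 (Go Y) (Go Z)) \<cdot> asc C (Fo (Go X)) (Fo (Go Y)) (Fo (Go Z))"
    using X Y Z by (simp add: F_asc)
  also have "... = (Fa (G2 X (tno C Y Z)) \<cdot> F2 (Go X) (Go (tno C Y Z))) \<cdot> (idm C (Fo (Go X)) \<otimes> (Fa (G2 Y Z) \<cdot> F2 (Go Y) (Go Z))) \<cdot> asc C (Fo (Go X)) (Fo (Go Y)) (Fo (Go Z))"
    using X Y Z by (simp add: tail2[OF F2_nat_id2])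
  finally show ?thesis .
qed

lemma FG_lu: assumes X: "X \<in> ob C"
  shows "Fa (Ga (lu C X)) \<cdot> (Fa (G2 (unt C) X) \<cdot> F2 (Go (unt C)) (Go X)) \<cdot> ((Fa G0 \<cdot> F0) \<otimes> idm C (Fo (Go X))) = lu C (Fo (Go X))"
proof -
  have "Fa (Ga (lu C X)) \<cdot> (Fa (G2 (unt C) X) \<cdot> F2 (Go (unt C)) (Go X)) \<cdot> ((Fa G0 \<cdot> F0) \<otimes> idm C (Fo (Go X)))
     = Fa (Ga (lu C X)) \<cdot> Fa (G2 (unt C) X) \<cdot> Fa (G0 \<otimes> idm C (Go X)) \<cdot> F2 (unt C) (Go X) \<cdot> (F0 \<otimes> idm C (Fo (Go X)))"
    using X by (simp add: tail2[OF F2_nat_id1])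
  also have "... = Fa (lu C (Go X)) \<cdot> F2 (unt C) (Go X) \<cdot> (F0 \<otimes> idm C (Fo (Go X)))"
    using X by (simp add: tail3[OF Fimg3[OF G_lu]])
  also have "... = lu C (Fo (Go X))" using X by (simp add: F_lu)
  finally show ?thesis .
qed

lemma FG_ru: assumes X: "X \<in> ob C"
  shows "Fa (Ga (ru C X)) \<cdot> (Fa (G2 X (unt C)) \<cdot> F2 (Go X) (Go (unt C))) \<cdot> (idm C (Fo (Go X)) \<otimes> (Fa G0 \<cdot> F0)) = ru C (Fo (Go X))"
proof -
  have "Fa (Ga (ru C X)) \<cdot> (Fa (G2 X (unt C)) \<cdot> F2 (Go X) (Go (unt C))) \<cdot> (idm C (Fo (Go X)) \<otimes> (Fa G0 \<cdot> F0))
     = Fa (Ga (ru C X)) \<cdot> Fa (G2 X (unt C)) \<cdot> Fa (idm C (Go X) \<otimes> G0) \<cdot> F2 (Go X) (unt C) \<cdot> (idm C (Fo (Go X)) \<otimes> F0)"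
    using X by (simp add: tail2[OF F2_nat_id2'])
  also have "... = Fa (ru C (Go X)) \<cdot> F2 (Go X) (unt C) \<cdot> (idm C (Fo (Go X)) \<otimes> F0)"
    using X by (simp add: tail3[OF Fimg3[OF G_ru]])
  also have "... = ru C (Fo (Go X))" using X by (simp add: F_ru)
  finally show ?thesis .
qed

lemma FG_mf: "monoidal_functor C (Fo \<circ> Go) (Fa \<circ> Ga) (\<lambda>M N. Fa (G2 M N) \<cdot> F2 (Go M) (Go N)) (Fa G0 \<cdot> F0)"
  unfolding monoidal_functor_def hom_def
  apply (intro conjI FG_ef ballI)
        apply (simp_all only: o_apply id_apply)
        apply simp
       apply (simp add: FG2_nat)
      apply simp
     apply (simp only: FG_asc)
    apply (simp only: FG_lu)
   apply (simp only: FG_ru)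
  done


lemmas F_d2 = bc_d2[OF BF] and F_e2 = bc_e2[OF BF] and F_d0 = bc_d0[OF BF] and F_e0 = bc_e0[OF BF]
lemmas G_d2 = bc_d2[OF BG] and G_e2 = bc_e2[OF BG] and G_d0 = bc_d0[OF BG] and G_e0 = bc_e0[OF BG]

lemma F2_nat_r: "f \<in> ar C \<Longrightarrow> g \<in> ar C \<Longrightarrow> src C f = A \<Longrightarrow> src C g = B \<Longrightarrow>
   Fa (f \<otimes> g) \<cdot> F2 A B = F2 (trg C f) (trg C g) \<cdot> (Fa f \<otimes> Fa g)"
  using F2_nat by metis
lemma G2_nat_r: "f \<in> ar C \<Longrightarrow> g \<in> ar C \<Longrightarrow> src C f = A \<Longrightarrow> src C g = B \<Longrightarrow>
   Ga (f \<otimes> g) \<cdot> G2 A B = G2 (trg C f) (trg C g) \<cdot> (Ga f \<otimes> Ga g)"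
  using G2_nat by metis

lemma FG_e2: assumes X: "X \<in> ob C" and Y: "Y \<in> ob C"
  shows "(eG (tno C X Y) \<cdot> eF (Go (tno C X Y))) \<cdot> (Fa (G2 X Y) \<cdot> F2 (Go X) (Go Y)) = (eG X \<cdot> eF (Go X)) \<otimes> (eG Y \<cdot> eF (Go Y))"
proof -
  have "(eG (tno C X Y) \<cdot> eF (Go (tno C X Y))) \<cdot> (Fa (G2 X Y) \<cdot> F2 (Go X) (Go Y)) = eG (tno C X Y) \<cdot> G2 X Y \<cdot> eF (tno C (Go X) (Go Y)) \<cdot> F2 (Go X) (Go Y)"
    using X Y by (simp add: tail2[OF eF_nat])
  also have "... = (eG X \<otimes> eG Y) \<cdot> (eF (Go X) \<otimes> eF (Go Y))"
    using X Y by (simp add: tail2[OF G_e2] F_e2)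
  also have "... = (eG X \<cdot> eF (Go X)) \<otimes> (eG Y \<cdot> eF (Go Y))"
    using X Y by (simp add: mc_interchange[OF MC])
  finally show ?thesis .
qed

lemma FG_e0: "(eG (unt C) \<cdot> eF (Go (unt C))) \<cdot> (Fa G0 \<cdot> F0) = idm C (unt C)"
proof -
  have "(eG (unt C) \<cdot> eF (Go (unt C))) \<cdot> (Fa G0 \<cdot> F0) = eG (unt C) \<cdot> G0 \<cdot> eF (unt C) \<cdot> F0"
    by (simp add: tail2[OF eF_nat])
  also have "... = idm C (unt C)" by (simp add: F_e0 G_e0)
  finally show ?thesis .
qed

lemma FG_d0: assumes U: "phi (unt C) \<cdot> Fa G0 \<cdot> F0 = Ga F0 \<cdot> G0"
  shows "Fa (Ga (Fa G0 \<cdot> F0)) \<cdot> Fa G0 \<cdot> F0 = (Fa (phi (Go (unt C))) \<cdot> Fa (Fa (dG (unt C))) \<cdot> DF (Go (unt C))) \<cdot> Fa G0 \<cdot> F0"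
proof -
  have "(Fa (phi (Go (unt C))) \<cdot> Fa (Fa (dG (unt C))) \<cdot> DF (Go (unt C))) \<cdot> Fa G0 \<cdot> F0
      = Fa (phi (Go (unt C))) \<cdot> Fa (Fa (dG (unt C))) \<cdot> Fa (Fa G0) \<cdot> Fa F0 \<cdot> F0"
    by (simp add: tail2[OF DF_nat] F_d0[symmetric])
  also have "... = Fa (phi (Go (unt C))) \<cdot> Fa (Fa (Ga G0)) \<cdot> Fa (Fa G0) \<cdot> Fa F0 \<cdot> F0"
    by (simp add: tail2[OF Fimg2[OF Fimg2[OF G_d0[symmetric]]]])
  also have "... = Fa (Ga (Fa G0)) \<cdot> Fa (phi (unt C)) \<cdot> Fa (Fa G0) \<cdot> Fa F0 \<cdot> F0"
    by (simp add: tail2[OF Fimg2[OF phi_nat]])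
  also have "... = Fa (Ga (Fa G0 \<cdot> F0)) \<cdot> Fa G0 \<cdot> F0"
    by (simp add: tail3[OF Fimg3[OF U]])
  finally show ?thesis by simp
qed


lemma FG_d2: assumes X: "X \<in> ob C" and Y: "Y \<in> ob C"
  and B: "phi (tno C (Go X) (Go Y)) \<cdot> Fa (G2 (Go X) (Go Y)) \<cdot> F2 (Go (Go X)) (Go (Go Y)) =
        Ga (F2 (Go X) (Go Y)) \<cdot> G2 (Fo (Go X)) (Fo (Go Y)) \<cdot> (phi (Go X) \<otimes> phi (Go Y))"
  shows "Fa (Ga (Fa (G2 X Y) \<cdot> F2 (Go X) (Go Y))) \<cdot> (Fa (G2 (Fo (Go X)) (Fo (Go Y))) \<cdot> F2 (Go (Fo (Go X))) (Go (Fo (Go Y))))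
     \<cdot> ((Fa (phi (Go X)) \<cdot> Fa (Fa (dG X)) \<cdot> DF (Go X)) \<otimes> (Fa (phi (Go Y)) \<cdot> Fa (Fa (dG Y)) \<cdot> DF (Go Y)))
   = (Fa (phi (Go (tno C X Y))) \<cdot> Fa (Fa (dG (tno C X Y))) \<cdot> DF (Go (tno C X Y))) \<cdot> (Fa (G2 X Y) \<cdot> F2 (Go X) (Go Y))"
proof -
  let ?gx = "Go X" and ?gy = "Go Y"
  have "(Fa (phi (Go (tno C X Y))) \<cdot> Fa (Fa (dG (tno C X Y))) \<cdot> DF (Go (tno C X Y))) \<cdot> (Fa (G2 X Y) \<cdot> F2 (Go X) (Go Y))
     = Fa (phi (Go (tno C X Y))) \<cdot> Fa (Fa (dG (tno C X Y))) \<cdot> Fa (Fa (G2 X Y)) \<cdot> DF (tno C ?gx ?gy) \<cdot> F2 ?gx ?gy"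
    using X Y by (simp add: tail2[OF DF_nat])
  also have "... = Fa (phi (Go (tno C X Y))) \<cdot> Fa (Fa (dG (tno C X Y))) \<cdot> Fa (Fa (G2 X Y)) \<cdot> Fa (F2 ?gx ?gy) \<cdot> F2 (Fo ?gx) (Fo ?gy) \<cdot> (DF ?gx \<otimes> DF ?gy)"
    using X Y by (simp add: F_d2[symmetric])
  also have "... = Fa (phi (Go (tno C X Y))) \<cdot> Fa (Fa (Ga (G2 X Y))) \<cdot> Fa (Fa (G2 (Go X) (Go Y))) \<cdot> Fa (Fa (dG X \<otimes> dG Y)) \<cdot> Fa (F2 ?gx ?gy) \<cdot> F2 (Fo ?gx) (Fo ?gy) \<cdot> (DF ?gx \<otimes> DF ?gy)"
    using X Y by (simp add: tail2[OF Fimg2[OF Fimg2[OF G_d2[symmetric]]]])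
  also have "... = Fa (phi (Go (tno C X Y))) \<cdot> Fa (Fa (Ga (G2 X Y))) \<cdot> Fa (Fa (G2 (Go X) (Go Y))) \<cdot> Fa (F2 (Go ?gx) (Go ?gy)) \<cdot> Fa (Fa (dG X) \<otimes> Fa (dG Y)) \<cdot> F2 (Fo ?gx) (Fo ?gy) \<cdot> (DF ?gx \<otimes> DF ?gy)"
    using X Y by (simp add: tail2[OF Fimg2[OF F2_nat_r]])
  also have "... = Fa (phi (Go (tno C X Y))) \<cdot> Fa (Fa (Ga (G2 X Y))) \<cdot> Fa (Fa (G2 (Go X) (Go Y))) \<cdot> Fa (F2 (Go ?gx) (Go ?gy)) \<cdot> F2 (Fo (Go ?gx)) (Fo (Go ?gy)) \<cdot> (Fa (Fa (dG X)) \<otimes> Fa (Fa (dG Y))) \<cdot> (DF ?gx \<otimes> DF ?gy)"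
    using X Y by (simp add: tail2[OF F2_nat_r])
  also have "... = Fa (Ga (Fa (G2 X Y))) \<cdot> Fa (phi (tno C ?gx ?gy)) \<cdot> Fa (Fa (G2 (Go X) (Go Y))) \<cdot> Fa (F2 (Go ?gx) (Go ?gy)) \<cdot> F2 (Fo (Go ?gx)) (Fo (Go ?gy)) \<cdot> (Fa (Fa (dG X)) \<otimes> Fa (Fa (dG Y))) \<cdot> (DF ?gx \<otimes> DF ?gy)"
    using X Y by (simp add: tail2[OF Fimg2[OF phi_nat]])
  also have "... = Fa (Ga (Fa (G2 X Y))) \<cdot> Fa (Ga (F2 ?gx ?gy)) \<cdot> Fa (G2 (Fo ?gx) (Fo ?gy)) \<cdot> Fa (phi ?gx \<otimes> phi ?gy) \<cdot> F2 (Fo (Go ?gx)) (Fo (Go ?gy)) \<cdot> (Fa (Fa (dG X)) \<otimes> Fa (Fa (dG Y))) \<cdot> (DF ?gx \<otimes> DF ?gy)"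
    using X Y by (simp add: tail3[OF Fimg3[OF B]])
  also have "... = Fa (Ga (Fa (G2 X Y))) \<cdot> Fa (Ga (F2 ?gx ?gy)) \<cdot> Fa (G2 (Fo ?gx) (Fo ?gy)) \<cdot> F2 (Go (Fo ?gx)) (Go (Fo ?gy)) \<cdot> (Fa (phi ?gx) \<otimes> Fa (phi ?gy)) \<cdot> (Fa (Fa (dG X)) \<otimes> Fa (Fa (dG Y))) \<cdot> (DF ?gx \<otimes> DF ?gy)"
    using X Y by (simp add: tail2[OF F2_nat_r])
  also have "... = Fa (Ga (Fa (G2 X Y) \<cdot> F2 (Go X) (Go Y))) \<cdot> (Fa (G2 (Fo (Go X)) (Fo (Go Y))) \<cdot> F2 (Go (Fo (Go X))) (Go (Fo (Go Y))))
     \<cdot> ((Fa (phi (Go X)) \<cdot> Fa (Fa (dG X)) \<cdot> DF (Go X)) \<otimes> (Fa (phi (Go Y)) \<cdot> Fa (Fa (dG Y)) \<cdot> DF (Go Y)))"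
    using X Y by (simp add: mc_interchange[OF MC])
  finally show ?thesis by simp
qed

lemma P_D: assumes Z: "Z \<in> ob C"
  shows "(Ga (Fa (eG Z)) \<cdot> eF (Go (Fo (Go Z)))) \<cdot> (Fa (phi (Go Z)) \<cdot> Fa (Fa (dG Z)) \<cdot> DF (Go Z)) = phi Z"
proof -
  have "(Ga (Fa (eG Z)) \<cdot> eF (Go (Fo (Go Z)))) \<cdot> (Fa (phi (Go Z)) \<cdot> Fa (Fa (dG Z)) \<cdot> DF (Go Z))
     = Ga (Fa (eG Z)) \<cdot> phi (Go Z) \<cdot> eF (Fo (Go (Go Z))) \<cdot> Fa (Fa (dG Z)) \<cdot> DF (Go Z)"
    using Z by (simp add: tail2[OF eF_nat])
  also have "... = Ga (Fa (eG Z)) \<cdot> phi (Go Z) \<cdot> Fa (dG Z) \<cdot> eF (Fo (Go Z)) \<cdot> DF (Go Z)"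
    using Z by (simp add: tail2[OF eF_nat])
  also have "... = phi Z \<cdot> Fa (Ga (eG Z)) \<cdot> Fa (dG Z)"
    using Z by (simp add: F_cu2 tail2[OF phi_nat_r])
  also have "... = phi Z"
    using Z by (simp add: Fimg2[OF G_cu1])
  finally show ?thesis .
qed


lemma bwd_2: assumes X: "X \<in> ob C" and Y: "Y \<in> ob C"
  and D2: "Fa (Ga (Fa (G2 X Y) \<cdot> F2 (Go X) (Go Y))) \<cdot> (Fa (G2 (Fo (Go X)) (Fo (Go Y))) \<cdot> F2 (Go (Fo (Go X))) (Go (Fo (Go Y))))
     \<cdot> ((Fa (phi (Go X)) \<cdot> Fa (Fa (dG X)) \<cdot> DF (Go X)) \<otimes> (Fa (phi (Go Y)) \<cdot> Fa (Fa (dG Y)) \<cdot> DF (Go Y)))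
   = (Fa (phi (Go (tno C X Y))) \<cdot> Fa (Fa (dG (tno C X Y))) \<cdot> DF (Go (tno C X Y))) \<cdot> (Fa (G2 X Y) \<cdot> F2 (Go X) (Go Y))"
  shows "phi (tno C X Y) \<cdot> Fa (G2 X Y) \<cdot> F2 (Go X) (Go Y) = Ga (F2 X Y) \<cdot> G2 (Fo X) (Fo Y) \<cdot> (phi X \<otimes> phi Y)"
proof -
  have XY: "tno C X Y \<in> ob C" using X Y by simp
  let ?gx = "Go X" and ?gy = "Go Y"
  have "phi (tno C X Y) \<cdot> Fa (G2 X Y) \<cdot> F2 (Go X) (Go Y) =
     ((Ga (Fa (eG (tno C X Y))) \<cdot> eF (Go (Fo (Go (tno C X Y))))) \<cdot> (Fa (phi (Go (tno C X Y))) \<cdot> Fa (Fa (dG (tno C X Y))) \<cdot> DF (Go (tno C X Y))))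
      \<cdot> (Fa (G2 X Y) \<cdot> F2 (Go X) (Go Y))"
    by (simp only: P_D[OF XY])
  also have "... = (Ga (Fa (eG (tno C X Y))) \<cdot> eF (Go (Fo (Go (tno C X Y))))) \<cdot> ((Fa (phi (Go (tno C X Y))) \<cdot> Fa (Fa (dG (tno C X Y))) \<cdot> DF (Go (tno C X Y)))
      \<cdot> (Fa (G2 X Y) \<cdot> F2 (Go X) (Go Y)))"
    using X Y by simp
  also have "... = (Ga (Fa (eG (tno C X Y))) \<cdot> eF (Go (Fo (Go (tno C X Y))))) \<cdot> (Fa (Ga (Fa (G2 X Y) \<cdot> F2 (Go X) (Go Y))) \<cdot> (Fa (G2 (Fo (Go X)) (Fo (Go Y))) \<cdot> F2 (Go (Fo (Go X))) (Go (Fo (Go Y))))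
     \<cdot> ((Fa (phi (Go X)) \<cdot> Fa (Fa (dG X)) \<cdot> DF (Go X)) \<otimes> (Fa (phi (Go Y)) \<cdot> Fa (Fa (dG Y)) \<cdot> DF (Go Y))))"
    by (simp only: D2)
  also have "... = Ga (Fa (eG (tno C X Y))) \<cdot> Ga (Fa (G2 X Y)) \<cdot> Ga (F2 ?gx ?gy) \<cdot> G2 (Fo ?gx) (Fo ?gy) \<cdot> (eF (Go (Fo ?gx)) \<otimes> eF (Go (Fo ?gy)))
     \<cdot> ((Fa (phi (Go X)) \<cdot> Fa (Fa (dG X)) \<cdot> DF (Go X)) \<otimes> (Fa (phi (Go Y)) \<cdot> Fa (Fa (dG Y)) \<cdot> DF (Go Y)))"
    using X Y by (simp add: tail2[OF eF_nat] tail2[OF F_e2])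
  also have "... = Ga (F2 X Y) \<cdot> G2 (Fo X) (Fo Y) \<cdot> (Ga (Fa (eG X)) \<otimes> Ga (Fa (eG Y))) \<cdot> (eF (Go (Fo ?gx)) \<otimes> eF (Go (Fo ?gy)))
     \<cdot> ((Fa (phi (Go X)) \<cdot> Fa (Fa (dG X)) \<cdot> DF (Go X)) \<otimes> (Fa (phi (Go Y)) \<cdot> Fa (Fa (dG Y)) \<cdot> DF (Go Y)))"
    using X Y by (simp add: tail2[OF Gimg2[OF Fimg2[OF G_e2]]] tail2[OF Gimg2[OF F2_nat_r]] tail2[OF G2_nat_r])
  also have "... = Ga (F2 X Y) \<cdot> G2 (Fo X) (Fo Y) \<cdot>
      (((Ga (Fa (eG X)) \<cdot> eF (Go (Fo (Go X)))) \<cdot> (Fa (phi (Go X)) \<cdot> Fa (Fa (dG X)) \<cdot> DF (Go X)))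
     \<otimes> ((Ga (Fa (eG Y)) \<cdot> eF (Go (Fo (Go Y)))) \<cdot> (Fa (phi (Go Y)) \<cdot> Fa (Fa (dG Y)) \<cdot> DF (Go Y))))"
    using X Y by (simp add: mc_interchange[OF MC])
  also have "... = Ga (F2 X Y) \<cdot> G2 (Fo X) (Fo Y) \<cdot> (phi X \<otimes> phi Y)"
    by (simp only: P_D[OF X] P_D[OF Y])
  finally show ?thesis .
qed

lemma bwd_0: assumes D0: "Fa (Ga (Fa G0 \<cdot> F0)) \<cdot> (Fa G0 \<cdot> F0) = (Fa (phi (Go (unt C))) \<cdot> Fa (Fa (dG (unt C))) \<cdot> DF (Go (unt C))) \<cdot> (Fa G0 \<cdot> F0)"
  shows "phi (unt C) \<cdot> Fa G0 \<cdot> F0 = Ga F0 \<cdot> G0"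
proof -
  have I: "unt C \<in> ob C" by simp
  have "phi (unt C) \<cdot> Fa G0 \<cdot> F0 = ((Ga (Fa (eG (unt C))) \<cdot> eF (Go (Fo (Go (unt C))))) \<cdot> (Fa (phi (Go (unt C))) \<cdot> Fa (Fa (dG (unt C))) \<cdot> DF (Go (unt C)))) \<cdot> (Fa G0 \<cdot> F0)"
    by (simp only: P_D[OF I])
  also have "... = (Ga (Fa (eG (unt C))) \<cdot> eF (Go (Fo (Go (unt C))))) \<cdot> ((Fa (phi (Go (unt C))) \<cdot> Fa (Fa (dG (unt C))) \<cdot> DF (Go (unt C))) \<cdot> (Fa G0 \<cdot> F0))"
    by simp
  also have "... = (Ga (Fa (eG (unt C))) \<cdot> eF (Go (Fo (Go (unt C))))) \<cdot> (Fa (Ga (Fa G0 \<cdot> F0)) \<cdot> (Fa G0 \<cdot> F0))"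
    by (simp only: D0)
  also have "... = Ga (Fa (eG (unt C))) \<cdot> Ga (Fa G0) \<cdot> Ga F0 \<cdot> G0"
    by (simp add: tail2[OF eF_nat] F_e0)
  also have "... = Ga F0 \<cdot> G0"
    by (simp add: tail2[OF Gimg2[OF Fimg2[OF G_e0]]])
  finally show ?thesis .
qed

end

theorem lemma3p4:
  fixes C :: "('o, 'a, 'm) moncat_scheme"
  assumes "monoidal_category C"
    and "bicomonad C Fo Fa DF eF F2 F0"
    and "bicomonad C Go Ga dG eG G2 G0"
    and "comonad_distributive_law C Fo Fa DF eF Go Ga dG eG phi"
  shows "monoidal_distributive_law C Fo Fa F2 F0 Go Ga G2 G0 phi \<longleftrightarrow>
         bicomonad C (Fo \<circ> Go) (Fa \<circ> Ga)
           (\<lambda>X. cmp C (Fa (phi (Go X))) (cmp C (Fa (Fa (dG X))) (DF (Go X))))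
           (\<lambda>X. cmp C (eG X) (eF (Go X)))
           (\<lambda>M N. cmp C (Fa (G2 M N)) (F2 (Go M) (Go N)))
           (cmp C (Fa G0) F0)"
proof -
  interpret S C Fo Fa DF eF F2 F0 Go Ga dG eG G2 G0 phi
    using assms by (simp add: S_def)
  show ?thesis
  proof
    assume M: "monoidal_distributive_law C Fo Fa F2 F0 Go Ga G2 G0 phi"
    have B: "\<And>M N. M \<in> ob C \<Longrightarrow> N \<in> ob C \<Longrightarrow> phi (tno C M N) \<cdot> Fa (G2 M N) \<cdot> F2 (Go M) (Go N) =
        Ga (F2 M N) \<cdot> G2 (Fo M) (Fo N) \<cdot> (phi M \<otimes> phi N)"
      and U: "phi (unt C) \<cdot> Fa G0 \<cdot> F0 = Ga F0 \<cdot> G0"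
      using M unfolding monoidal_distributive_law_def by auto
    show "bicomonad C (Fo \<circ> Go) (Fa \<circ> Ga)
           (\<lambda>X. cmp C (Fa (phi (Go X))) (cmp C (Fa (Fa (dG X))) (DF (Go X))))
           (\<lambda>X. cmp C (eG X) (eF (Go X)))
           (\<lambda>M N. cmp C (Fa (G2 M N)) (F2 (Go M) (Go N)))
           (cmp C (Fa G0) F0)"
      unfolding bicomonad_def
      apply (intro conjI FG_comonad FG_mf ballI)
         apply (simp_all only: o_apply)
         apply (rule FG_d2, assumption, assumption, rule B; simp)
        apply (rule FG_e2; assumption)
       apply (rule FG_d0[OF U])
      apply (rule FG_e0)
      done
  next
    assume Bc: "bicomonad C (Fo \<circ> Go) (Fa \<circ> Ga)
           (\<lambda>X. cmp C (Fa (phi (Go X))) (cmp C (Fa (Fa (dG X))) (DF (Go X))))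
           (\<lambda>X. cmp C (eG X) (eF (Go X)))
           (\<lambda>M N. cmp C (Fa (G2 M N)) (F2 (Go M) (Go N)))
           (cmp C (Fa G0) F0)"
    show "monoidal_distributive_law C Fo Fa F2 F0 Go Ga G2 G0 phi"
      unfolding monoidal_distributive_law_def
    proof (intro conjI ballI)
      fix M N assume "M \<in> ob C" "N \<in> ob C"
      then show "phi (tno C M N) \<cdot> Fa (G2 M N) \<cdot> F2 (Go M) (Go N) = Ga (F2 M N) \<cdot> G2 (Fo M) (Fo N) \<cdot> (phi M \<otimes> phi N)"
        using Bc unfolding bicomonad_def o_apply by (intro bwd_2) auto
    next
      show "phi (unt C) \<cdot> Fa G0 \<cdot> F0 = Ga F0 \<cdot> G0"
        using Bc unfolding bicomonad_def o_apply by (intro bwd_0) auto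
    qed
  qed
qed

end
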